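(* Let $\alpha:\mathbb{R}\rightarrow\mathbb{R}$ be a $C^2$ function all of whose zeros are simple, i.e. on the set $\mathcal{X}:=\{x\in\mathbb{R} \mid \alpha(x)=0\}$ one has $\alpha'(x)\neq 0$. Define $f:\mathbb{R}^2\rightarrow\mathbb{R}$ by \[ f(x,y) := \left(\alpha(x) - \left[\alpha(x)-\alpha'(x)\right]^2 y\right)^2 - A(x), \] where $A$ is any antiderivative of $x\mapsto \alpha(x)\left[\alpha(x)-\alpha'(x)\right]$. Let $\mathcal{C}(f):=\{(x,y)\mid f_x(x,y)=f_y(x,y)=0\}$ be the set of critical points of $f$. Then: (1) $\mathcal{C}(f) = \mathcal{X}\times\{0\}$; (2) at each point of $\mathcal{C}(f)$ the Hessian of $f$ is positive definite. Consequently, $f$ has local minima at the points of $\mathcal{X}\times\{0\}$ and no other critical points. *)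

theory Defs
  imports "HOL-Analysis.Analysis"
begin

definition partial_x :: "(real \<times> real \<Rightarrow> real) \<Rightarrow> real \<times> real \<Rightarrow> real" where
  "partial_x f p = deriv (\<lambda>t. f (t, snd p)) (fst p)"

definition partial_y :: "(real \<times> real \<Rightarrow> real) \<Rightarrow> real \<times> real \<Rightarrow> real" where
  "partial_y f p = deriv (\<lambda>t. f (fst p, t)) (snd p)"

definition critical_points :: "(real \<times> real \<Rightarrow> real) \<Rightarrow> (real \<times> real) set" where
  "critical_points f = {p. partial_x f p = 0 \<and> partial_y f p = 0}"

definition hessian :: "(real \<times> real \<Rightarrow> real) \<Rightarrow> real \<times> real \<Rightarrow> real^2^2" where
  "hessian f p =
     vector [vector [partial_x (partial_x f) p, partial_y (partial_x f) p],
             vector [partial_x (partial_y f) p, partial_y (partial_y f) p]]"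

definition pos_def :: "real^2^2 \<Rightarrow> bool" where
  "pos_def M \<longleftrightarrow> (\<forall>v::real^2. v \<noteq> 0 \<longrightarrow> v \<bullet> (M *v v) > 0)"

end

theory Submission
  imports Defs
begin

lemma sign_aux: "(u::real) * s > 0 \<Longrightarrow> v * s < 0 \<Longrightarrow> u * v < 0"
  by (smt (verit) mult_neg_neg mult_pos_pos mult_less_0_iff zero_less_mult_iff)


lemma crit_alg:
  fixes a b c y :: real
  assumes fx: "2*(a - (a-b)^2*y)*(b - 2*(a-b)*(b-c)*y) - a*(a-b) = 0"
    and fy: "-2*(a-b)^2*(a-(a-b)^2*y) = 0"
    and s: "a = 0 \<Longrightarrow> b \<noteq> 0"
  shows "a = 0 \<and> y = 0"
proof (cases "a - b = 0")
  case True
  then have "b = a" by simp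
  with fx have "2*a*a = 0" by simp
  then have "a = 0" by simp
  with s \<open>b = a\<close> show ?thesis by simp
next
  case False
  then have g2: "(a-b)^2 \<noteq> 0" by simp
  with fy have ay: "a = (a-b)^2*y" by simp
  with fx have "a*(a-b) = 0" by simp
  with False have "a = 0" by simp
  with ay g2 show ?thesis by simp
qed

lemma pd_alg:
  fixes b v1 v2 :: real
  assumes "b \<noteq> 0" "v1 \<noteq> 0 \<or> v2 \<noteq> 0"
  shows "v1 * (3*b^2* v1 + (-2*b^3)* v2) + v2*((-2*b^3)* v1 + 2*b^4* v2) > 0"
proof -
  have e: "v1 * (3*b^2* v1 + (-2*b^3)* v2) + v2*((-2*b^3)* v1 + 2*b^4* v2) = b^2*(2*(b* v2 - v1)^2 + v1^2)"
    by (simp add: power2_eq_square power3_eq_cube algebra_simps) (simp add: power_def numeral_eq_Suc algebra_simps)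
  have "2*(b* v2 - v1)^2 + v1^2 > 0"
  proof (cases "v1 = 0")
    case True then show ?thesis using assms by simp
  next
    case False then show ?thesis by (simp add: add_nonneg_pos)
  qed
  then show ?thesis unfolding e using assms by simp
qed

theorem lemma1:
  fixes \<alpha> \<alpha>' \<alpha>'' A :: "real \<Rightarrow> real"
    and f :: "real \<times> real \<Rightarrow> real"
  assumes d1: "\<And>x. (\<alpha> has_real_derivative \<alpha>' x) (at x)"
    and d2: "\<And>x. (\<alpha>' has_real_derivative \<alpha>'' x) (at x)"
    and c2: "continuous_on UNIV \<alpha>''"
    and simple: "\<And>x. \<alpha> x = 0 \<Longrightarrow> \<alpha>' x \<noteq> 0"
    and antider: "\<And>x. (A has_real_derivative \<alpha> x * (\<alpha> x - \<alpha>' x)) (at x)"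
    and f_def: "\<And>x y. f (x, y) = (\<alpha> x - (\<alpha> x - \<alpha>' x)\<^sup>2 * y)\<^sup>2 - A x"
  shows "critical_points f = {x. \<alpha> x = 0} \<times> {0}
    \<and> (\<forall>p \<in> critical_points f. pos_def (hessian f p))
    \<and> (\<forall>p \<in> {x. \<alpha> x = 0} \<times> {0}. \<exists>e>0. \<forall>q. dist q p < e \<longrightarrow> f p \<le> f q)"
proof -
  have d1': "\<And>x s. (\<alpha> has_real_derivative \<alpha>' x) (at x within s)"
    using d1 has_field_derivative_at_within by blast
  have d2': "\<And>x s. (\<alpha>' has_real_derivative \<alpha>'' x) (at x within s)"
    using d2 has_field_derivative_at_within by blast
  have dA': "\<And>x s. (A has_real_derivative \<alpha> x * (\<alpha> x - \<alpha>' x)) (at x within s)"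
    using antider has_field_derivative_at_within by blast
  define Fx where "Fx = (\<lambda>x y. 2 * (\<alpha> x - (\<alpha> x - \<alpha>' x)\<^sup>2 * y) *
       (\<alpha>' x - 2 * (\<alpha> x - \<alpha>' x) * (\<alpha>' x - \<alpha>'' x) * y) - \<alpha> x * (\<alpha> x - \<alpha>' x))"
  define Fy where "Fy = (\<lambda>x y. - 2 * (\<alpha> x - \<alpha>' x)\<^sup>2 * (\<alpha> x - (\<alpha> x - \<alpha>' x)\<^sup>2 * y))"
  have px: "partial_x f (x, y) = Fx x y" for x y
  proof -
    have "((\<lambda>t. f (t, y)) has_real_derivative Fx x y) (at x)"
      unfolding f_def Fx_def
      by (auto intro!: derivative_eq_intros d1' d2' dA' simp: power2_eq_square algebra_simps)
    then show ?thesis unfolding partial_x_def by (simp add: DERIV_imp_deriv)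
  qed
  have py: "partial_y f (x, y) = Fy x y" for x y
  proof -
    have "((\<lambda>t. f (x, t)) has_real_derivative Fy x y) (at y)"
      unfolding f_def Fy_def
      by (auto intro!: derivative_eq_intros simp: power2_eq_square algebra_simps)
    then show ?thesis unfolding partial_y_def by (simp add: DERIV_imp_deriv)
  qed

  have crit: "critical_points f = {x. \<alpha> x = 0} \<times> {0}"
  proof (rule set_eqI)
    fix p :: "real \<times> real"
    obtain x y where p: "p = (x, y)" by (cases p)
    show "p \<in> critical_points f \<longleftrightarrow> p \<in> {x. \<alpha> x = 0} \<times> {0}"
    proof
      assume "p \<in> critical_points f"
      then have "Fx x y = 0" "Fy x y = 0" unfolding critical_points_def p using px py by auto
      then have "\<alpha> x = 0 \<and> y = 0" using crit_alg[of "\<alpha> x" "\<alpha>' x" y "\<alpha>'' x"] simple[of x]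
        unfolding Fx_def Fy_def by auto
      then show "p \<in> {x. \<alpha> x = 0} \<times> {0}" using p by auto
    next
      assume "p \<in> {x. \<alpha> x = 0} \<times> {0}"
      then have "\<alpha> x = 0" "y = 0" using p by auto
      then show "p \<in> critical_points f" unfolding critical_points_def p by (simp add: px py Fx_def Fy_def)
    qed
  qed
  have hess: "pos_def (hessian f (x, 0))" if ax: "\<alpha> x = 0" for x
  proof -
    define b where "b = \<alpha>' x"
    have b0: "b \<noteq> 0" using simple[OF ax] b_def by simp
    have pxe: "partial_x f = (\<lambda>p. Fx (fst p) (snd p))" using px by auto
    have pye: "partial_y f = (\<lambda>p. Fy (fst p) (snd p))" using py by auto
    have h11: "partial_x (partial_x f) (x, 0) = 3*b^2"
    proof -
      have "((\<lambda>t. Fx t 0) has_real_derivative 3*b^2) (at x)"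
        unfolding Fx_def
        by (auto intro!: derivative_eq_intros d1' d2' simp: ax b_def power2_eq_square algebra_simps)
      then show ?thesis unfolding partial_x_def pxe by (simp add: DERIV_imp_deriv)
    qed
    have h12: "partial_y (partial_x f) (x, 0) = -2*b^3"
    proof -
      have "((\<lambda>t. Fx x t) has_real_derivative -2*b^3) (at 0)"
        unfolding Fx_def
        by (auto intro!: derivative_eq_intros simp: ax b_def power2_eq_square power3_eq_cube algebra_simps)
      then show ?thesis unfolding partial_y_def pxe by (simp add: DERIV_imp_deriv)
    qed
    have h21: "partial_x (partial_y f) (x, 0) = -2*b^3"
    proof -
      have "((\<lambda>t. Fy t 0) has_real_derivative -2*b^3) (at x)"
        unfolding Fy_def
        by (auto intro!: derivative_eq_intros d1' d2' simp: ax b_def power2_eq_square power3_eq_cube algebra_simps)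
      then show ?thesis unfolding partial_x_def pye by (simp add: DERIV_imp_deriv)
    qed
    have h22: "partial_y (partial_y f) (x, 0) = 2*b^4"
    proof -
      have "((\<lambda>t. Fy x t) has_real_derivative 2*b^4) (at 0)"
        unfolding Fy_def
        by (auto intro!: derivative_eq_intros simp: ax b_def power2_eq_square algebra_simps) (simp add: power_def numeral_eq_Suc algebra_simps)
      then show ?thesis unfolding partial_y_def pye by (simp add: DERIV_imp_deriv)
    qed
    show ?thesis
      unfolding pos_def_def hessian_def h11 h12 h21 h22
    proof (intro allI impI)
      fix v :: "real^2"
      assume "v \<noteq> 0"
      then have "v$1 \<noteq> 0 \<or> v$2 \<noteq> 0" by (auto simp: vec_eq_iff forall_2)
      then show "v \<bullet> (vector [vector [3 * b\<^sup>2, - 2 * b ^ 3], vector [- 2 * b ^ 3, 2 * b ^ 4]] *v v) > 0"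
        using pd_alg[OF b0, of "v$1" "v$2"]
        by (simp add: inner_vec_def matrix_vector_mult_def sum_2)
    qed
  qed

  have locmin: "\<exists>e>0. \<forall>q. dist q (x0, 0) < e \<longrightarrow> f (x0, 0) \<le> f q" if ax: "\<alpha> x0 = 0" for x0
  proof -
    have b0: "\<alpha>' x0 \<noteq> 0" using simple[OF ax] .
    define h where "h = (\<lambda>t. min (\<alpha>' t * \<alpha>' x0) (- ((\<alpha> t - \<alpha>' t) * \<alpha>' x0)))"
    have ca: "isCont \<alpha> t" for t using d1 DERIV_isCont by blast
    have cb: "isCont \<alpha>' t" for t using d2 DERIV_isCont by blast
    have ch: "isCont h x0" unfolding h_def by (intro continuous_intros ca cb)
    have hx0: "h x0 > 0" unfolding h_def using ax b0 by (auto simp add: zero_less_mult_iff linorder_neq_iff)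
    have "\<forall>\<^sub>F t in at x0. h t > 0"
      using ch hx0 unfolding isCont_def by (rule order_tendstoD(1))
    then obtain e where e: "e > 0" "\<And>t. t \<noteq> x0 \<Longrightarrow> dist t x0 < e \<Longrightarrow> h t > 0"
      unfolding eventually_at by auto
    have pos: "\<alpha>' t * \<alpha>' x0 > 0 \<and> (\<alpha> t - \<alpha>' t) * \<alpha>' x0 < 0" if "\<bar>t - x0\<bar> < e" for t
    proof (cases "t = x0")
      case True then show ?thesis using hx0 unfolding h_def by simp
    next
      case False then have "h t > 0" using e that by (simp add: dist_real_def)
      then show ?thesis unfolding h_def by simp
    qed
    have sgn: "\<alpha> z * (\<alpha> z - \<alpha>' z) * (z - x0) \<le> 0" if z: "\<bar>z - x0\<bar> < e" for z
    proof -
      have gz: "(\<alpha> z - \<alpha>' z) * \<alpha>' x0 < 0" using pos[OF z] by simp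
      consider "z = x0" | "z > x0" | "z < x0" by linarith
      then show ?thesis
      proof cases
        case 1 then show ?thesis by simp
      next
        case 2
        obtain \<xi> where xi: "x0 < \<xi>" "\<xi> < z" "\<alpha> z - \<alpha> x0 = (z - x0) * \<alpha>' \<xi>"
          using MVT2[OF 2, of \<alpha> \<alpha>'] d1 by blast
        have "\<alpha>' \<xi> * \<alpha>' x0 > 0" using pos[of \<xi>] xi z 2 by simp
        then have n: "\<alpha>' \<xi> * (\<alpha> z - \<alpha>' z) < 0" using sign_aux gz by blast
        have "\<alpha> z * (\<alpha> z - \<alpha>' z) * (z - x0) = (\<alpha>' \<xi> * (\<alpha> z - \<alpha>' z)) * (z - x0)^2"
        proof -
          have "\<alpha> z = (z - x0) * \<alpha>' \<xi>" using xi ax by simp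
          then show ?thesis by (simp add: power2_eq_square)
        qed
        also have "\<dots> \<le> 0" using n by (simp add: mult_nonpos_nonneg)
        finally show ?thesis .
      next
        case 3
        obtain \<xi> where xi: "z < \<xi>" "\<xi> < x0" "\<alpha> x0 - \<alpha> z = (x0 - z) * \<alpha>' \<xi>"
          using MVT2[OF 3, of \<alpha> \<alpha>'] d1 by blast
        have "\<alpha>' \<xi> * \<alpha>' x0 > 0" using pos[of \<xi>] xi z 3 by simp
        then have n: "\<alpha>' \<xi> * (\<alpha> z - \<alpha>' z) < 0" using sign_aux gz by blast
        have "\<alpha> z * (\<alpha> z - \<alpha>' z) * (z - x0) = (\<alpha>' \<xi> * (\<alpha> z - \<alpha>' z)) * (z - x0)^2"
        proof -
          have "\<alpha> z = (z - x0) * \<alpha>' \<xi>" using xi ax by (simp add: algebra_simps)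
          then show ?thesis by (simp add: power2_eq_square)
        qed
        also have "\<dots> \<le> 0" using n by (simp add: mult_nonpos_nonneg)
        finally show ?thesis .
      qed
    qed
    have Amax: "A x \<le> A x0" if x: "\<bar>x - x0\<bar> < e" for x
    proof -
      consider "x = x0" | "x > x0" | "x < x0" by linarith
      then show ?thesis
      proof cases
        case 1 then show ?thesis by simp
      next
        case 2
        obtain z where z: "x0 < z" "z < x" "A x - A x0 = (x - x0) * (\<alpha> z * (\<alpha> z - \<alpha>' z))"
          using MVT2[OF 2, of A "\<lambda>z. \<alpha> z * (\<alpha> z - \<alpha>' z)"] antider by blast
        have "\<alpha> z * (\<alpha> z - \<alpha>' z) * (z - x0) \<le> 0" using sgn[of z] z x 2 by simp
        then have "\<alpha> z * (\<alpha> z - \<alpha>' z) \<le> 0" using z(1)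
          by (simp add: mult_le_0_iff)
        then have "(x - x0) * (\<alpha> z * (\<alpha> z - \<alpha>' z)) \<le> 0" using 2
          by (simp add: mult_nonneg_nonpos)
        then show ?thesis using z by simp
      next
        case 3
        obtain z where z: "x < z" "z < x0" "A x0 - A x = (x0 - x) * (\<alpha> z * (\<alpha> z - \<alpha>' z))"
          using MVT2[OF 3, of A "\<lambda>z. \<alpha> z * (\<alpha> z - \<alpha>' z)"] antider by blast
        have "\<alpha> z * (\<alpha> z - \<alpha>' z) * (z - x0) \<le> 0" using sgn[of z] z x 3 by simp
        then have "\<alpha> z * (\<alpha> z - \<alpha>' z) \<ge> 0" using z(2)
          by (simp add: mult_le_0_iff)
        then have "(x0 - x) * (\<alpha> z * (\<alpha> z - \<alpha>' z)) \<ge> 0" using 3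
          by simp
        then show ?thesis using z by simp
      qed
    qed
    show ?thesis
    proof (intro exI[of _ e] conjI allI impI)
      show "e > 0" by (rule e)
      fix q :: "real \<times> real"
      assume dq: "dist q (x0, 0) < e"
      obtain x y where q: "q = (x, y)" by (cases q)
      have "dist x x0 < e" using dist_fst_le[of q "(x0,0)"] dq q by simp
      then have "A x \<le> A x0" using Amax by (simp add: dist_real_def)
      moreover have "(\<alpha> x - (\<alpha> x - \<alpha>' x)\<^sup>2 * y)\<^sup>2 \<ge> 0" by simp
      moreover have "f (x0, 0) = - A x0" using ax by (simp add: f_def)
      moreover have "f q = (\<alpha> x - (\<alpha> x - \<alpha>' x)\<^sup>2 * y)\<^sup>2 - A x" by (simp add: q f_def)
      ultimately show "f (x0, 0) \<le> f q" by linarith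
    qed
  qed
  show ?thesis using crit hess locmin by auto
qed

end
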